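(* Let $(E_n)_{n\in\mathbb Z}$ be the integer sequence with $E_0=0$, $E_1=E_2=1$ and $E_n+E_{n+2}=E_{n+3}$ for all $n\in\mathbb Z$, and for $i,j\in\mathbb Z$ let $\Delta_{i,j}=E_iE_{i+j-1}-E_{i+j}E_{i-1}$. Then: (a) for every fixed $i\in\mathbb Z$, $\Delta_{i,j-3}+\Delta_{i,j-1}=\Delta_{i,j}$ for all $j\in\mathbb Z$, with $\Delta_{i,1}=E_i^2-E_{i-1}E_{i+1}$, $\Delta_{i,2}=E_iE_{i+1}-E_{i-1}E_{i+2}$, $\Delta_{i,3}=E_iE_{i+2}-E_{i-1}E_{i+3}$, and $\Delta_{i,2}=\Delta_{i,3}$; (b) for every fixed $j\in\mathbb Z$, $\Delta_{i+2,j}+\Delta_{i,j}=\Delta_{i-1,j}$ for all $i\in\mathbb Z$, with $\Delta_{1,j}=E_j$, $\Delta_{2,j}=-E_{j-1}$, $\Delta_{3,j}=-E_j$.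
   Context: $\Delta_{i,j}$ equals the determinant $\det\begin{pmatrix}E_n & E_{n-1} & E_{n+1}\\ E_{n+i} & E_{n+i-1} & E_{n+i+1}\\ E_{n+i+j} & E_{n+i+j-1} & E_{n+i+j+1}\end{pmatrix}$ for any $n\in\mathbb Z$. *)

theory Defs
  imports Main
begin

definition Delta :: "(int \<Rightarrow> int) \<Rightarrow> int \<Rightarrow> int \<Rightarrow> int" where
  "Delta E i j = E i * E (i + j - 1) - E (i + j) * E (i - 1)"

end

theory Submission
  imports Defs
begin

definition D3 :: "(int \<Rightarrow> int) \<Rightarrow> int \<Rightarrow> int \<Rightarrow> int \<Rightarrow> int" where
  "D3 E a b c =
     E a * (E (b - 1) * E (c + 1) - E (b + 1) * E (c - 1))
   - E (a - 1) * (E b * E (c + 1) - E (b + 1) * E c)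
   + E (a + 1) * (E b * E (c - 1) - E (b - 1) * E c)"

lemma D3_shift:
  assumes rec: "\<And>n. E n + E (n + 2) = E (n + 3)"
  shows "D3 E (a + 1) (b + 1) (c + 1) = D3 E a b c"
proof -
  have r: "\<And>m. E (m + 2) = E (m - 1) + E (m + 1)"
  proof -
    fix m have "E (m - 1) + E (m - 1 + 2) = E (m - 1 + 3)" by (rule rec)
    then show "E (m + 2) = E (m - 1) + E (m + 1)" by (simp add: add.commute)
  qed
  have ra: "E (a + 1 + 1) = E (a - 1) + E (a + 1)" using r[of a] by (simp add: add.assoc)
  have rb: "E (b + 1 + 1) = E (b - 1) + E (b + 1)" using r[of b] by (simp add: add.assoc)
  have rc: "E (c + 1 + 1) = E (c - 1) + E (c + 1)" using r[of c] by (simp add: add.assoc)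
  have s: "a + 1 - 1 = a" "b + 1 - 1 = b" "c + 1 - 1 = c" by simp_all
  show ?thesis unfolding D3_def by (simp only: ra rb rc s) (simp add: algebra_simps)
qed

lemma D3_shiftk:
  assumes rec: "\<And>n. E n + E (n + 2) = E (n + 3)"
  shows "D3 E (a + k) (b + k) (c + k) = D3 E a b c"
proof (induction k rule: int_induct[where k=0])
  case base then show ?case by simp
next
  case (step1 i)
  have "D3 E (a + (i + 1)) (b + (i + 1)) (c + (i + 1)) = D3 E (a + i + 1) (b + i + 1) (c + i + 1)"
    by (simp add: add.assoc)
  also have "\<dots> = D3 E (a + i) (b + i) (c + i)" using D3_shift[OF rec] by blast
  finally show ?case using step1 by simp
next
  case (step2 i)
  have "D3 E (a + i) (b + i) (c + i) = D3 E (a + (i - 1) + 1) (b + (i - 1) + 1) (c + (i - 1) + 1)"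
    by simp
  also have "\<dots> = D3 E (a + (i - 1)) (b + (i - 1)) (c + (i - 1))" using D3_shift[OF rec] by blast
  finally show ?case using step2 by simp
qed

theorem theorem16:
  fixes E :: "int \<Rightarrow> int"
  assumes E0: "E 0 = 0" and E1: "E 1 = 1" and E2: "E 2 = 1"
    and rec: "\<And>n. E n + E (n + 2) = E (n + 3)"
  shows "(\<forall>i j. Delta E i (j - 3) + Delta E i (j - 1) = Delta E i j)
       \<and> (\<forall>i. Delta E i 1 = E i ^ 2 - E (i - 1) * E (i + 1))
       \<and> (\<forall>i. Delta E i 2 = E i * E (i + 1) - E (i - 1) * E (i + 2))
       \<and> (\<forall>i. Delta E i 3 = E i * E (i + 2) - E (i - 1) * E (i + 3))
       \<and> (\<forall>i. Delta E i 2 = Delta E i 3)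
       \<and> (\<forall>i j. Delta E (i + 2) j + Delta E i j = Delta E (i - 1) j)
       \<and> (\<forall>j. Delta E 1 j = E j)
       \<and> (\<forall>j. Delta E 2 j = - E (j - 1))
       \<and> (\<forall>j. Delta E 3 j = - E j)"
proof -
  have r: "\<And>m. E (m + 2) = E (m - 1) + E (m + 1)"
  proof -
    fix m have "E (m - 1) + E (m - 1 + 2) = E (m - 1 + 3)" by (rule rec)
    then show "E (m + 2) = E (m - 1) + E (m + 1)" by (simp add: add.commute)
  qed
  have Em1: "E (-1) = 0" using rec[of "-1"] E1 E2 by simp
  have E3: "E 3 = 1" using rec[of 0] E0 E2 by simp
  have A: "\<forall>i j. Delta E i (j - 3) + Delta E i (j - 1) = Delta E i j"
  proof (intro allI)
    fix i j
    have "E (i + j - 1) = E (i + j - 4) + E (i + j - 2)" using r[of "i + j - 3"] by simp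
    moreover have "E (i + j) = E (i + j - 3) + E (i + j - 1)" using r[of "i + j - 2"] by simp
    ultimately show "Delta E i (j - 3) + Delta E i (j - 1) = Delta E i j"
      unfolding Delta_def by (simp add: algebra_simps)
  qed
  have B: "\<forall>i. Delta E i 2 = Delta E i 3"
  proof
    fix i
    have "E (i + 3) = E i + E (i + 2)" using rec[of i] by simp
    moreover have "E (i + 2) = E (i - 1) + E (i + 1)" using r[of i] by simp
    ultimately show "Delta E i 2 = Delta E i 3" unfolding Delta_def by (simp add: algebra_simps)
  qed
  have DD: "\<And>i j. Delta E i j = D3 E (- i) 0 j"
  proof -
    fix i j
    have "D3 E (- i) 0 j = D3 E (- i + i) (0 + i) (j + i)" using D3_shiftk[OF rec] by metis
    also have "\<dots> = Delta E i j"
      unfolding D3_def Delta_def using E0 E1 Em1 by (simp add: algebra_simps)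
    finally show "Delta E i j = D3 E (- i) 0 j" by simp
  qed
  have C: "\<forall>i j. Delta E (i + 2) j + Delta E i j = Delta E (i - 1) j"
  proof (intro allI)
    fix i j :: int
    define m where "m = - i - 2"
    have e1: "E (m + 3) = E m + E (m + 2)" using rec[of m] by simp
    have e2: "E (m + 3 - 1) = E (m - 1) + E (m + 2 - 1)" using r[of "m"] by (simp add: add.commute)
    have e3: "E (m + 3 + 1) = E (m + 1) + E (m + 2 + 1)" using rec[of "m + 1"] by (simp add: algebra_simps)
    have "D3 E m 0 j + D3 E (m + 2) 0 j = D3 E (m + 3) 0 j"
      unfolding D3_def by (simp only: e1 e2 e3) (simp add: algebra_simps)
    moreover have "- (i + 2) = m" "- i = m + 2" "- (i - 1) = m + 3" using m_def by simp_all
    ultimately show "Delta E (i + 2) j + Delta E i j = Delta E (i - 1) j" unfolding DD by metis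
  qed
  have F2: "\<forall>j. Delta E 2 j = - E (j - 1)"
  proof
    fix j show "Delta E 2 j = - E (j - 1)"
      using r[of j] E1 E2 unfolding Delta_def by (simp add: add.commute)
  qed
  have F3: "\<forall>j. Delta E 3 j = - E j"
  proof
    fix j show "Delta E 3 j = - E j"
      using rec[of j] E3 E2 unfolding Delta_def by (simp add: add.commute)
  qed
  have G: "\<forall>i. Delta E i 1 = E i ^ 2 - E (i - 1) * E (i + 1)"
    "\<forall>i. Delta E i 2 = E i * E (i + 1) - E (i - 1) * E (i + 2)"
    "\<forall>i. Delta E i 3 = E i * E (i + 2) - E (i - 1) * E (i + 3)"
    "\<forall>j. Delta E 1 j = E j"
    unfolding Delta_def using E0 E1 by (simp_all add: power2_eq_square algebra_simps)
  show ?thesis using A B C F2 F3 G by blast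
qed

end
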